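(* Suppose $\mu_x$ and $p_y$ are Borel measurable and $\mu_x$ is supported on $\{\|x\|\le1\}$. For $x\in\mathbb{R}^d$ let $\tilde x:=(x,1)/\sqrt2\in\mathbb{R}^{d+1}$. Then for any $\epsilon>0$ there exist infinite-width weights $\overline U_\infty:\mathbb{R}^{d+1}\to\mathbb{R}^{d+1}$ with $R:=\sup_{\tilde v\in\mathbb{R}^{d+1}}\|\overline U_\infty(\tilde v)\|<\infty$ and $\mathcal R(\overline U_\infty)\le\overline{\mathcal R}+\epsilon$.
   Context: $\mu$ is a Borel probability measure on $\mathbb{R}^d\times\{-1,+1\}$ with $x$-marginal $\mu_x$ and conditional $p_y(x)=\Pr[Y=1\mid X=x]$. $\ell(r)=\ln(1+e^{-r})$. For $U:\mathbb{R}^{d+1}\to\mathbb{R}^{d+1}$, $f(z;U)=\int\langle U(v),z\mathbf 1[v^\top z\ge0]\rangle\,d\mathcal N(v)$ with $\mathcal N$ the standard Gaussian on $\mathbb{R}^{d+1}$, and here $\mathcal R(\overline U_\infty)=\mathbb E\,\ell(Yf(\tilde X;\overline U_\infty))$. $\overline{\mathcal R}=\inf\{\mathbb E\,\ell(Yg(X)):g:\mathbb{R}^d\to\mathbb{R}\text{ measurable}\}$. *)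

theory Defs
  imports "HOL-Probability.Probability"
begin

definition logloss :: "real \<Rightarrow> real" where
  "logloss r = ln (1 + exp (- r))"

definition std_gauss :: "'b::euclidean_space measure" where
  "std_gauss = density lborel
     (\<lambda>v. ennreal ((2 * pi) powr (- real DIM('b) / 2) * exp (- (norm v)\<^sup>2 / 2)))"

text \<open>Lift x in R^d to (x,1)/sqrt 2 in R^(d+1), modelled as the product type 'a \<times> real.\<close>
definition lift :: "'a::euclidean_space \<Rightarrow> 'a \<times> real" where
  "lift x = (1 / sqrt 2) *\<^sub>R (x, 1)"

definition infnet :: "('b::euclidean_space \<Rightarrow> 'b) \<Rightarrow> 'b \<Rightarrow> real" where
  "infnet U z = (\<integral>v. (if v \<bullet> z \<ge> 0 then U v \<bullet> z else 0) \<partial>std_gauss)"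

text \<open>Risk of U; data measure mu on (x,y) with y in {-1,1}. Loss is nonnegative, so we
  use the nonnegative integral.\<close>
definition riskU :: "('a::euclidean_space \<times> real) measure \<Rightarrow> ('a \<times> real \<Rightarrow> 'a \<times> real) \<Rightarrow> ennreal" where
  "riskU \<mu> U = (\<integral>\<^sup>+ p. ennreal (logloss (snd p * infnet U (lift (fst p)))) \<partial>\<mu>)"

definition risk_opt :: "('a::euclidean_space \<times> real) measure \<Rightarrow> ennreal" where
  "risk_opt \<mu> = (INF g \<in> (borel_measurable borel :: ('a \<Rightarrow> real) set).
      \<integral>\<^sup>+ p. ennreal (logloss (snd p * g (fst p))) \<partial>\<mu>)"

end

theory Submission
  imports Defs
begin

definition goodU :: "('b::euclidean_space \<Rightarrow> 'b) \<Rightarrow> bool" where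
 "goodU U \<longleftrightarrow> U \<in> borel_measurable borel \<and> (\<exists>R. \<forall>v. norm (U v) \<le> R) \<and> (\<exists>Rb. \<forall>v. Rb < norm v \<longrightarrow> U v = 0)"

lemma sets_std_gauss[simp, measurable_cong]: "sets (std_gauss :: 'b::euclidean_space measure) = sets borel"
  by (simp add: std_gauss_def)

lemma space_std_gauss[simp]: "space (std_gauss :: 'b::euclidean_space measure) = UNIV"
  by (simp add: std_gauss_def)

lemma gauss_const_le1: "(2 * pi) powr (- real n / 2) \<le> 1"
proof -
  have "(2 * pi) powr (- real n / 2) = 1 / (2 * pi) powr (real n / 2)"
    using powr_minus_divide[of "2*pi" "real n / 2"] by simp
  moreover have "1 \<le> (2 * pi) powr (real n / 2)"
    by (rule ge_one_powr_ge_zero) (use pi_gt3 in auto)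
  ultimately show ?thesis by simp
qed

lemma gauss_dens_le1: "(2 * pi) powr (- real DIM('b::euclidean_space) / 2) * exp (- (norm (v::'b))\<^sup>2 / 2) \<le> 1"
proof -
  have "(2 * pi) powr (- real DIM('b) / 2) \<le> 1" by (rule gauss_const_le1)
  moreover have "exp (- (norm v)\<^sup>2 / 2) \<le> 1" by simp
  ultimately show ?thesis by (simp add: mult_le_one)
qed

lemmas gauss_dens_le1' = gauss_dens_le1[simplified]

lemma emeasure_std_gauss: fixes A :: "'b::euclidean_space set" shows "A \<in> sets borel \<Longrightarrow> emeasure (std_gauss :: 'b measure) A = (\<integral>\<^sup>+ v. ennreal ((2 * pi) powr (- real DIM('b) / 2) * exp (- (norm v)\<^sup>2 / 2)) * indicator A v \<partial>lborel)"
  unfolding std_gauss_def by (subst emeasure_density) auto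

lemma gauss_cball_finite: "emeasure (std_gauss :: 'b::euclidean_space measure) (cball 0 r) < \<infinity>"
proof -
  have "emeasure (std_gauss :: 'b measure) (cball 0 r) = (\<integral>\<^sup>+ v. ennreal ((2 * pi) powr (- real DIM('b) / 2) * exp (- (norm v)\<^sup>2 / 2)) * indicator (cball (0::'b) r) v \<partial>lborel)"
    by (rule emeasure_std_gauss) simp
  also have "\<dots> \<le> (\<integral>\<^sup>+ v. indicator (cball (0::'b) r) v \<partial>lborel)"
    by (intro nn_integral_mono) (auto simp: gauss_dens_le1' split: split_indicator)
  also have "\<dots> = emeasure lborel (cball (0::'b) r)" by simp
  also have "\<dots> < \<infinity>" by (rule emeasure_lborel_cball_finite)
  finally show ?thesis .
qed

lemma gauss_ball_pos: 
  assumes "r > 0"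
  shows "emeasure (std_gauss :: 'b::euclidean_space measure) (ball u r) > 0"
proof -
  define c0 where "c0 = (2 * pi) powr (- real DIM('b) / 2) * exp (- (norm u + r)\<^sup>2 / 2)"
  have c0: "c0 > 0" unfolding c0_def by simp
  have "ennreal c0 * emeasure lborel (ball u r) = (\<integral>\<^sup>+ v. ennreal c0 * indicator (ball u r) v \<partial>lborel)"
    by (subst nn_integral_cmult_indicator) auto
  also have "\<dots> \<le> (\<integral>\<^sup>+ v. ennreal ((2 * pi) powr (- real DIM('b) / 2) * exp (- (norm v)\<^sup>2 / 2)) * indicator (ball u r) v \<partial>lborel)"
  proof (intro nn_integral_mono)
    fix v :: 'b
    show "ennreal c0 * indicator (ball u r) v \<le> ennreal ((2 * pi) powr (- real DIM('b) / 2) * exp (- (norm v)\<^sup>2 / 2)) * indicator (ball u r) v"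
    proof (cases "v \<in> ball u r")
      case True
      then have "norm v \<le> norm u + r"
        by (metis add.commute dist_norm less_eq_real_def mem_ball norm_triangle_sub order_trans add_le_cancel_left norm_minus_commute)
      then have "(norm v)\<^sup>2 \<le> (norm u + r)\<^sup>2" using power_mono by force
      then have "c0 \<le> (2 * pi) powr (- real DIM('b) / 2) * exp (- (norm v)\<^sup>2 / 2)"
        unfolding c0_def by (intro mult_left_mono) auto
      then show ?thesis using True by (simp add: ennreal_leI)
    qed simp
  qed
  also have "\<dots> = emeasure std_gauss (ball u r)" by (rule emeasure_std_gauss[symmetric]) simp
  finally have le: "ennreal c0 * emeasure lborel (ball u r) \<le> emeasure std_gauss (ball u r)" .
  have "emeasure lborel (ball u r) = ennreal (measure lborel (ball u r))"
    using emeasure_lborel_ball_finite[of u r] by (subst emeasure_eq_ennreal_measure) auto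
  then have "emeasure lborel (ball u r) > 0"
    using assms by simp
  then have "ennreal c0 * emeasure lborel (ball u r) > 0" using c0 by (simp add: ennreal_zero_less_mult_iff)
  then show ?thesis using le by order
qed

lemma integrand_meas[measurable]:
  assumes "U \<in> borel_measurable borel"
  shows "(\<lambda>v. if 0 \<le> v \<bullet> z then U v \<bullet> z else 0) \<in> borel_measurable (std_gauss :: 'b::euclidean_space measure)"
  using assms by measurable

lemma goodU_integrable:
  fixes U :: "'b::euclidean_space \<Rightarrow> 'b"
  assumes "goodU U"
  shows "integrable std_gauss (\<lambda>v. if 0 \<le> v \<bullet> z then U v \<bullet> z else 0)"
proof -
  obtain R Rb where R: "\<And>v. norm (U v) \<le> R" and Rb: "\<And>v. Rb < norm v \<Longrightarrow> U v = 0"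
    and m: "U \<in> borel_measurable borel"
    using assms unfolding goodU_def by blast
  have "integrable std_gauss (\<lambda>v. indicator (cball (0::'b) Rb) v * (R * norm z))"
    by (intro integrable_mult_left integrable_real_indicator gauss_cball_finite) simp
  then show ?thesis
  proof (rule Bochner_Integration.integrable_bound)
    show "(\<lambda>v. if 0 \<le> v \<bullet> z then U v \<bullet> z else 0) \<in> borel_measurable std_gauss"
      using m by measurable
    show "AE v in std_gauss. norm (if 0 \<le> v \<bullet> z then U v \<bullet> z else 0) \<le> norm (indicator (cball (0::'b) Rb) v * (R * norm z))"
    proof (intro AE_I2)
      fix v :: 'b
      have R0: "0 \<le> R" using R[of 0] norm_ge_zero order_trans by blast
      have "\<bar>U v \<bullet> z\<bar> \<le> R * norm z"
        using Cauchy_Schwarz_ineq2[of "U v" z] R[of v] by (meson mult_right_mono norm_ge_zero order_trans)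
      then show "norm (if 0 \<le> v \<bullet> z then U v \<bullet> z else 0) \<le> norm (indicator (cball (0::'b) Rb) v * (R * norm z))"
        using Rb[of v] R0 by (auto simp: indicator_def abs_mult)
    qed
  qed
qed

lemma goodU_add:
  assumes "goodU U1" "goodU U2"
  shows "goodU (\<lambda>v. U1 v + U2 v)" "infnet (\<lambda>v. U1 v + U2 v) z = infnet U1 z + infnet U2 z"
proof -
  obtain R1 Rb1 where R1: "\<And>v. norm (U1 v) \<le> R1" and Rb1: "\<And>v. Rb1 < norm v \<Longrightarrow> U1 v = 0"
    and m1: "U1 \<in> borel_measurable borel"
    using assms unfolding goodU_def by blast
  obtain R2 Rb2 where R2: "\<And>v. norm (U2 v) \<le> R2" and Rb2: "\<And>v. Rb2 < norm v \<Longrightarrow> U2 v = 0"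
    and m2: "U2 \<in> borel_measurable borel"
    using assms unfolding goodU_def by blast
  have "\<forall>v. norm (U1 v + U2 v) \<le> R1 + R2"
    using R1 R2 norm_triangle_le add_mono by blast
  moreover have "\<forall>v. max Rb1 Rb2 < norm v \<longrightarrow> U1 v + U2 v = 0"
    using Rb1 Rb2 by auto
  moreover have "(\<lambda>v. U1 v + U2 v) \<in> borel_measurable borel" using m1 m2 by measurable
  ultimately show "goodU (\<lambda>v. U1 v + U2 v)" unfolding goodU_def by blast
  have "infnet (\<lambda>v. U1 v + U2 v) z = (\<integral>v. (if 0 \<le> v \<bullet> z then U1 v \<bullet> z else 0) + (if 0 \<le> v \<bullet> z then U2 v \<bullet> z else 0) \<partial>std_gauss)"
    unfolding infnet_def by (intro Bochner_Integration.integral_cong) (auto simp: inner_add_left)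
  also have "\<dots> = infnet U1 z + infnet U2 z"
    unfolding infnet_def by (intro Bochner_Integration.integral_add goodU_integrable assms)
  finally show "infnet (\<lambda>v. U1 v + U2 v) z = infnet U1 z + infnet U2 z" .
qed

lemma goodU_scale:
  assumes "goodU U"
  shows "goodU (\<lambda>v. c *\<^sub>R U v)" "infnet (\<lambda>v. c *\<^sub>R U v) z = c * infnet U z"
proof -
  obtain R Rb where R: "\<And>v. norm (U v) \<le> R" and Rb: "\<And>v. Rb < norm v \<Longrightarrow> U v = 0"
    and m: "U \<in> borel_measurable borel"
    using assms unfolding goodU_def by blast
  have "\<forall>v. norm (c *\<^sub>R U v) \<le> \<bar>c\<bar> * R"
    using R by (simp add: mult_left_mono)
  moreover have "\<forall>v. Rb < norm v \<longrightarrow> c *\<^sub>R U v = 0"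
    using Rb by auto
  moreover have "(\<lambda>v. c *\<^sub>R U v) \<in> borel_measurable borel" using m by measurable
  ultimately show "goodU (\<lambda>v. c *\<^sub>R U v)" unfolding goodU_def by blast
  have "infnet (\<lambda>v. c *\<^sub>R U v) z = (\<integral>v. c * (if 0 \<le> v \<bullet> z then U v \<bullet> z else 0) \<partial>std_gauss)"
    unfolding infnet_def by (intro Bochner_Integration.integral_cong) auto
  also have "\<dots> = c * infnet U z"
    unfolding infnet_def by simp
  finally show "infnet (\<lambda>v. c *\<^sub>R U v) z = c * infnet U z" .
qed

lemma goodU_zero: fixes z :: "'b::euclidean_space" shows "goodU (\<lambda>v. 0::'b)" "infnet (\<lambda>v. 0::'b) z = 0"
  unfolding goodU_def infnet_def by (auto simp only: inner_zero_left if_cancel) auto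

lemma meas_maxinner[measurable]: "(\<lambda>v::'b::euclidean_space. max 0 (v \<bullet> z)) \<in> borel_measurable borel"
  by (intro borel_measurable_continuous_onI continuous_intros)

lemma ball_pred[measurable]: "Measurable.pred borel (\<lambda>x::'b::euclidean_space. x \<in> ball u r)"
  unfolding pred_def by simp

lemma relu_approx:
  fixes u :: "'b::euclidean_space"
  assumes r: "r > 0"
  obtains U where "goodU U" "\<And>z. \<bar>infnet U z - max 0 (u \<bullet> z)\<bar> \<le> r * norm z"
proof -
  define B where "B = ball u r"
  define m where "m = measure (std_gauss :: 'b measure) B"
  have Bfin: "emeasure (std_gauss :: 'b measure) B < \<infinity>"
  proof -
    have "B \<subseteq> cball 0 (norm u + r)"
    proof
      fix v assume "v \<in> B"
      then have "norm (v - u) < r" unfolding B_def by (simp add: dist_norm norm_minus_commute)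
      moreover have "norm v \<le> norm u + norm (v - u)" using norm_triangle_ineq[of u "v - u"] by simp
      ultimately show "v \<in> cball 0 (norm u + r)" by simp
    qed
    then have "emeasure (std_gauss :: 'b measure) B \<le> emeasure std_gauss (cball (0::'b) (norm u + r))"
      by (intro emeasure_mono) auto
    then show ?thesis using gauss_cball_finite order_le_less_trans by blast
  qed
  have Bpos: "emeasure (std_gauss :: 'b measure) B > 0" unfolding B_def using gauss_ball_pos r by blast
  have meq: "emeasure (std_gauss :: 'b measure) B = ennreal m"
    unfolding m_def using Bfin by (simp add: emeasure_eq_ennreal_measure less_top)
  have mpos: "m > 0" using Bpos meq by simp
  define U where "U v = (indicator B v / m) *\<^sub>R v" for v :: 'b
  have normB: "norm v \<le> norm u + r" if "v \<in> B" for v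
  proof -
    have "norm (v - u) < r" using that unfolding B_def by (simp add: dist_norm norm_minus_commute)
    moreover have "norm v \<le> norm u + norm (v - u)" using norm_triangle_ineq[of u "v - u"] by simp
    ultimately show ?thesis by simp
  qed
  have "goodU U"
    unfolding goodU_def
  proof (intro conjI exI allI impI)
    show "U \<in> borel_measurable borel" unfolding U_def by (intro borel_measurable_scaleR borel_measurable_divide borel_measurable_indicator borel_measurable_const measurable_ident_sets) (auto simp: B_def)
    show "norm (U v) \<le> (norm u + r) / m" for v
      using normB[of v] mpos r by (auto simp: U_def indicator_def divide_right_mono)
    show "U v = 0" if "norm u + r < norm v" for v
      using normB[of v] that by (auto simp: U_def indicator_def)
  qed
  moreover have "\<bar>infnet U z - max 0 (u \<bullet> z)\<bar> \<le> r * norm z" for z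
  proof -
    have int1: "integrable std_gauss (\<lambda>v. indicator B v * C)" for C :: real
      using Bfin by (intro integrable_mult_left integrable_real_indicator) (auto simp: B_def)
    have intf: "integrable std_gauss (\<lambda>v. indicator B v * max 0 (v \<bullet> z))"
    proof (rule Bochner_Integration.integrable_bound[OF int1[of "(norm u + r) * norm z"]])
      show "(\<lambda>v. indicator B v * max 0 (v \<bullet> z)) \<in> borel_measurable std_gauss"
        unfolding B_def by measurable
      show "AE v in std_gauss. norm (indicator B v * max 0 (v \<bullet> z)) \<le> norm (indicator B v * ((norm u + r) * norm z))"
      proof (intro AE_I2)
        fix v
        show "norm (indicator B v * max 0 (v \<bullet> z)) \<le> norm (indicator B v * ((norm u + r) * norm z))"
        proof (cases "v \<in> B")
          case True
          have "\<bar>v \<bullet> z\<bar> \<le> (norm u + r) * norm z"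
            using Cauchy_Schwarz_ineq2[of v z] normB[OF True] by (meson mult_right_mono norm_ge_zero order_trans)
          then show ?thesis using True by (auto simp: indicator_def)
        qed (simp add: indicator_def)
      qed
    qed
    have "infnet U z = (\<integral>v. indicator B v * max 0 (v \<bullet> z) / m \<partial>std_gauss)"
      unfolding infnet_def U_def by (intro Bochner_Integration.integral_cong) (auto simp: indicator_def)
    also have "\<dots> = (\<integral>v. indicator B v * max 0 (v \<bullet> z) \<partial>std_gauss) / m" by simp
    finally have e1: "infnet U z = (\<integral>v. indicator B v * max 0 (v \<bullet> z) \<partial>std_gauss) / m" .
    have "(\<integral>v. indicator B v * max 0 (u \<bullet> z) \<partial>std_gauss) = m * max 0 (u \<bullet> z)"
      using Bfin by (simp add: m_def B_def)
    note i2 = this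
    have i3: "(\<integral>v. indicator B v * (max 0 (v \<bullet> z) - max 0 (u \<bullet> z)) \<partial>std_gauss) = (\<integral>v. indicator B v * max 0 (v \<bullet> z) \<partial>std_gauss) - m * max 0 (u \<bullet> z)"
      using intf int1[of "max 0 (u \<bullet> z)"] i2 by (simp add: right_diff_distrib)
    have "infnet U z - max 0 (u \<bullet> z) = (\<integral>v. indicator B v * (max 0 (v \<bullet> z) - max 0 (u \<bullet> z)) \<partial>std_gauss) / m"
      unfolding e1 i3 using mpos by (simp add: diff_divide_distrib)
    moreover have "\<bar>\<integral>v. indicator B v * (max 0 (v \<bullet> z) - max 0 (u \<bullet> z)) \<partial>std_gauss\<bar> \<le> (\<integral>v. indicator B v * (r * norm z) \<partial>std_gauss)"
    proof (rule integral_abs_bound_integral)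
      show "integrable std_gauss (\<lambda>v. indicator B v * (max 0 (v \<bullet> z) - max 0 (u \<bullet> z)))"
        using intf int1[of "max 0 (u \<bullet> z)"] by (simp add: right_diff_distrib)
      show "integrable std_gauss (\<lambda>v. indicator B v * (r * norm z))" by (rule int1)
      fix v
      show "\<bar>indicator B v * (max 0 (v \<bullet> z) - max 0 (u \<bullet> z))\<bar> \<le> indicator B v * (r * norm z)"
      proof (cases "v \<in> B")
        case True
        have "\<bar>max 0 (v \<bullet> z) - max 0 (u \<bullet> z)\<bar> \<le> \<bar>v \<bullet> z - u \<bullet> z\<bar>" by linarith
        also have "\<dots> = \<bar>(v - u) \<bullet> z\<bar>" by (simp add: inner_diff_left)
        also have "\<dots> \<le> norm (v - u) * norm z" by (rule Cauchy_Schwarz_ineq2)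
        also have "\<dots> \<le> r * norm z"
          using True unfolding B_def by (intro mult_right_mono) (auto simp: dist_norm norm_minus_commute)
        finally show ?thesis using True by simp
      qed simp
    qed
    moreover have "(\<integral>v. indicator B v * (r * norm z) \<partial>std_gauss) = m * (r * norm z)"
      using Bfin by (simp add: m_def B_def)
    ultimately have eq: "infnet U z - max 0 (u \<bullet> z) = (\<integral>v. indicator B v * (max 0 (v \<bullet> z) - max 0 (u \<bullet> z)) \<partial>std_gauss) / m"
      and A: "\<bar>\<integral>v. indicator B v * (max 0 (v \<bullet> z) - max 0 (u \<bullet> z)) \<partial>std_gauss\<bar> \<le> m * (r * norm z)"
      by linarith+
    have "\<bar>infnet U z - max 0 (u \<bullet> z)\<bar> = \<bar>\<integral>v. indicator B v * (max 0 (v \<bullet> z) - max 0 (u \<bullet> z)) \<partial>std_gauss\<bar> / m"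
      unfolding eq using mpos by simp
    also have "\<dots> \<le> m * (r * norm z) / m" using A mpos by (intro divide_right_mono) auto
    also have "\<dots> = r * norm z" using mpos by simp
    finally show ?thesis .
  qed
  ultimately show ?thesis using that by blast
qed

lemma interp:
  fixes \<phi> :: "real \<Rightarrow> real" and a b L t :: real and n :: nat
  assumes ab: "a < b" and n: "n > 0"
    and lip: "\<And>s t. s \<in> {a..b} \<Longrightarrow> t \<in> {a..b} \<Longrightarrow> \<bar>\<phi> s - \<phi> t\<bar> \<le> L * \<bar>s - t\<bar>"
    and t: "t \<in> {a..b}"
  shows "\<bar>\<phi> t - (\<phi> a + (\<Sum>k<n. (\<phi> (a + real (Suc k) * ((b - a) / n)) - \<phi> (a + real k * ((b - a) / n))) / ((b - a) / n) *
            (max 0 (t - (a + real k * ((b - a) / n))) - max 0 (t - (a + real (Suc k) * ((b - a) / n))))))\<bar>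
         \<le> 2 * L * ((b - a) / n)"
proof -
  define h where "h = (b - a) / n"
  define s where "s k = a + real k * h" for k :: nat
  have h: "h > 0" unfolding h_def using ab n by simp
  have sn: "s n = b" unfolding s_def h_def using n by simp
  have smono: "s i \<le> s k" if "i \<le> k" for i k unfolding s_def using h that by (simp add: mult_right_mono)
  have sSuc: "s (Suc k) = s k + h" for k unfolding s_def by (simp add: algebra_simps)
  have sab: "s k \<in> {a..b}" if "k \<le> n" for k
    using smono[of 0 k] smono[OF that] sn by (simp add: s_def)
  have L0: "L \<ge> 0"
  proof -
    have "\<bar>\<phi> a - \<phi> b\<bar> \<le> L * \<bar>a - b\<bar>" using lip[of a b] ab by simp
    then have "0 \<le> L * \<bar>a - b\<bar>" by linarith
    then show ?thesis using ab by (simp add: zero_le_mult_iff)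
  qed
  obtain j where j: "j < n" "s j \<le> t" "t \<le> s (Suc j)"
  proof -
    define j0 where "j0 = nat \<lfloor>(t - a) / h\<rfloor>"
    define j where "j = min j0 (n - 1)"
    have ta: "0 \<le> (t - a) / h" using t h by auto
    have j0le: "real j0 \<le> (t - a) / h" unfolding j0_def using ta by linarith
    have j0gt: "(t - a) / h < real j0 + 1" unfolding j0_def using ta by linarith
    have "j < n" unfolding j_def using n by simp
    moreover have "s j \<le> t"
    proof -
      have "real j \<le> (t - a) / h" unfolding j_def using j0le by linarith
      then have "real j * h \<le> t - a" using h by (simp add: le_divide_eq)
      then show ?thesis unfolding s_def by simp
    qed
    moreover have "t \<le> s (Suc j)"
    proof (cases "j0 \<le> n - 1")
      case True
      then have "j = j0" unfolding j_def by simp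
      then have "(t - a) / h < real (Suc j)" using j0gt by simp
      then have "t - a < real (Suc j) * h" using h by (simp add: divide_less_eq)
      then show ?thesis unfolding s_def by simp
    next
      case False
      then have "Suc j = n" unfolding j_def using n by simp
      then show ?thesis using sn t by simp
    qed
    ultimately show ?thesis using that by blast
  qed
  define \<Delta> where "\<Delta> k = \<phi> (s (Suc k)) - \<phi> (s k)" for k
  define \<theta> where "\<theta> = (t - s j) / h"
  have \<theta>: "0 \<le> \<theta>" "\<theta> \<le> 1" unfolding \<theta>_def using j h sSuc[of j] by (auto simp: divide_le_eq)
  have termeq: "\<Delta> k / h * (max 0 (t - s k) - max 0 (t - s (Suc k))) =
      (if k < j then \<Delta> k else 0) + (if k = j then \<Delta> j * \<theta> else 0)" if "k < n" for k
  proof -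
    consider "k < j" | "k = j" | "j < k" by linarith
    then show ?thesis
    proof cases
      case 1
      then have "s (Suc k) \<le> s j" using smono by simp
      then have X: "max 0 (t - s k) - max 0 (t - s (Suc k)) = h" using j sSuc[of k] h by auto
      show ?thesis unfolding X using 1 h by simp
    next
      case 2
      then show ?thesis using j h unfolding \<theta>_def by auto
    next
      case 3
      then have "s (Suc j) \<le> s k" using smono by simp
      then show ?thesis using 3 j sSuc[of k] h by auto
    qed
  qed
  have "(\<Sum>k<n. \<Delta> k / h * (max 0 (t - s k) - max 0 (t - s (Suc k)))) =
        (\<Sum>k<n. (if k < j then \<Delta> k else 0) + (if k = j then \<Delta> j * \<theta> else 0))"
    by (intro sum.cong refl termeq) simp
  also have "\<dots> = (\<Sum>k<n. (if k < j then \<Delta> k else 0)) + \<Delta> j * \<theta>"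
    using j by (simp add: sum.distrib)
  also have "(\<Sum>k<n. (if k < j then \<Delta> k else 0)) = (\<Sum>k\<in>{x\<in>{..<n}. x < j}. \<Delta> k)"
    by (rule sum.inter_filter[symmetric]) simp
  also have "{x\<in>{..<n}. x < j} = {..<j}" using j by auto
  also have "(\<Sum>k<j. \<Delta> k) = \<phi> (s j) - \<phi> (s 0)"
    unfolding \<Delta>_def by (rule sum_lessThan_telescope)
  finally have sumeq: "(\<Sum>k<n. \<Delta> k / h * (max 0 (t - s k) - max 0 (t - s (Suc k)))) = \<phi> (s j) - \<phi> a + \<Delta> j * \<theta>"
    by (simp add: s_def)
  have "\<bar>\<phi> t - \<phi> (s j)\<bar> \<le> L * \<bar>t - s j\<bar>" using lip[of t "s j"] t sab[of j] j by simp
  also have "\<dots> \<le> L * h" using j sSuc[of j] L0 by (intro mult_left_mono) auto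
  finally have e1: "\<bar>\<phi> t - \<phi> (s j)\<bar> \<le> L * h" .
  have "\<bar>\<Delta> j\<bar> \<le> L * \<bar>s (Suc j) - s j\<bar>" unfolding \<Delta>_def using lip[of "s (Suc j)" "s j"] sab[of j] sab[of "Suc j"] j by simp
  then have e2: "\<bar>\<Delta> j\<bar> \<le> L * h" using sSuc[of j] h by simp
  have "\<bar>\<Delta> j * \<theta>\<bar> \<le> L * h" using e2 \<theta> by (simp add: abs_mult mult_le_one) (metis mult.commute mult_left_le order_trans abs_ge_zero)
  then have "\<bar>\<phi> t - (\<phi> a + (\<phi> (s j) - \<phi> a + \<Delta> j * \<theta>))\<bar> \<le> 2 * L * h" using e1 by linarith
  then show ?thesis using sumeq unfolding s_def h_def \<Delta>_def by simp
qed

definition app :: "('a::euclidean_space \<Rightarrow> real) \<Rightarrow> bool" where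
  "app g \<longleftrightarrow> (\<forall>\<delta>>0. \<exists>U::'a \<times> real \<Rightarrow> 'a \<times> real. goodU U \<and> (\<forall>x\<in>cball 0 1. \<bar>g x - infnet U (lift x)\<bar> \<le> \<delta>))"

lemma app_add:
  assumes "app f" "app g"
  shows "app (\<lambda>x. f x + g x)"
  unfolding app_def
proof (intro allI impI)
  fix \<delta> :: real assume d: "\<delta> > 0"
  obtain U1 :: "'a \<times> real \<Rightarrow> 'a \<times> real" where U1: "goodU U1" "\<forall>x\<in>cball 0 1. \<bar>f x - infnet U1 (lift x)\<bar> \<le> \<delta>/2"
    using assms(1) d unfolding app_def by (meson half_gt_zero)
  obtain U2 :: "'a \<times> real \<Rightarrow> 'a \<times> real" where U2: "goodU U2" "\<forall>x\<in>cball 0 1. \<bar>g x - infnet U2 (lift x)\<bar> \<le> \<delta>/2"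
    using assms(2) d unfolding app_def by (meson half_gt_zero)
  have "goodU (\<lambda>v. U1 v + U2 v)" using goodU_add U1 U2 by blast
  moreover have "\<forall>x\<in>cball 0 1. \<bar>f x + g x - infnet (\<lambda>v. U1 v + U2 v) (lift x)\<bar> \<le> \<delta>"
  proof
    fix x :: 'a assume x: "x \<in> cball 0 1"
    have "\<bar>f x - infnet U1 (lift x)\<bar> \<le> \<delta>/2" "\<bar>g x - infnet U2 (lift x)\<bar> \<le> \<delta>/2" using U1(2) U2(2) x by auto
    then show "\<bar>f x + g x - infnet (\<lambda>v. U1 v + U2 v) (lift x)\<bar> \<le> \<delta>"
      unfolding goodU_add(2)[OF U1(1) U2(1)] by arith
  qed
  ultimately show "\<exists>U::'a \<times> real \<Rightarrow> 'a \<times> real. goodU U \<and> (\<forall>x\<in>cball 0 1. \<bar>f x + g x - infnet U (lift x)\<bar> \<le> \<delta>)"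
    by blast
qed

lemma app_scale:
  assumes "app f"
  shows "app (\<lambda>x. c * f x)"
  unfolding app_def
proof (intro allI impI)
  fix \<delta> :: real assume d: "\<delta> > 0"
  obtain U1 :: "'a \<times> real \<Rightarrow> 'a \<times> real" where U1: "goodU U1" "\<forall>x\<in>cball 0 1. \<bar>f x - infnet U1 (lift x)\<bar> \<le> \<delta> / (\<bar>c\<bar> + 1)"
  proof -
    have "\<delta> / (\<bar>c\<bar> + 1) > 0" using d by (simp add: add_nonneg_pos)
    then show ?thesis using assms(1) that unfolding app_def by blast
  qed
  have "goodU (\<lambda>v. c *\<^sub>R U1 v)" using goodU_scale U1 by blast
  moreover have "\<bar>c * f x - infnet (\<lambda>v. c *\<^sub>R U1 v) (lift x)\<bar> \<le> \<delta>" if x: "x \<in> cball 0 1" for x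
  proof -
    have "\<bar>c * f x - infnet (\<lambda>v. c *\<^sub>R U1 v) (lift x)\<bar> = \<bar>c\<bar> * \<bar>f x - infnet U1 (lift x)\<bar>"
      using goodU_scale(2)[OF U1(1)] by (simp add: abs_mult[symmetric] right_diff_distrib)
    also have "\<dots> \<le> \<bar>c\<bar> * (\<delta> / (\<bar>c\<bar> + 1))" using U1(2) x by (intro mult_left_mono) auto
    also have "\<dots> \<le> \<delta>" using d by (simp add: field_simps)
    finally show ?thesis .
  qed
  ultimately show "\<exists>U::'a \<times> real \<Rightarrow> 'a \<times> real. goodU U \<and> (\<forall>x\<in>cball 0 1. \<bar>c * f x - infnet U (lift x)\<bar> \<le> \<delta>)"
    by blast
qed

lemma app_zero: "app (\<lambda>x. 0)"
  unfolding app_def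
proof (intro allI impI)
  fix \<delta> :: real assume "\<delta> > 0"
  then show "\<exists>U::'a \<times> real \<Rightarrow> 'a \<times> real. goodU U \<and> (\<forall>x\<in>cball 0 1. \<bar>0 - infnet U (lift x)\<bar> \<le> \<delta>)"
    using goodU_zero[where 'b="'a \<times> real"] by (intro exI[of _ "\<lambda>v. 0"]) auto
qed

lemma app_unif:
  assumes "\<And>\<delta>. \<delta> > 0 \<Longrightarrow> \<exists>h. app h \<and> (\<forall>x\<in>cball 0 1. \<bar>g x - h x\<bar> \<le> \<delta>)"
  shows "app g"
  unfolding app_def
proof (intro allI impI)
  fix \<delta> :: real assume d: "\<delta> > 0"
  obtain h where h: "app h" "\<forall>x\<in>cball 0 1. \<bar>g x - h x\<bar> \<le> \<delta>/2" using assms[of "\<delta>/2"] d by auto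
  obtain U1 :: "'a \<times> real \<Rightarrow> 'a \<times> real" where U1: "goodU U1" "\<forall>x\<in>cball 0 1. \<bar>h x - infnet U1 (lift x)\<bar> \<le> \<delta>/2"
    using h(1) d unfolding app_def by (meson half_gt_zero)
  have "\<forall>x\<in>cball 0 1. \<bar>g x - infnet U1 (lift x)\<bar> \<le> \<delta>"
  proof
    fix x :: 'a assume x: "x \<in> cball 0 1"
    have "\<bar>g x - h x\<bar> \<le> \<delta>/2" "\<bar>h x - infnet U1 (lift x)\<bar> \<le> \<delta>/2" using U1(2) h(2) x by auto
    then show "\<bar>g x - infnet U1 (lift x)\<bar> \<le> \<delta>" by arith
  qed
  then show "\<exists>U::'a \<times> real \<Rightarrow> 'a \<times> real. goodU U \<and> (\<forall>x\<in>cball 0 1. \<bar>g x - infnet U (lift x)\<bar> \<le> \<delta>)"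
    using U1(1) by blast
qed

lemma app_sum:
  fixes n :: nat
  assumes "\<And>k. k < n \<Longrightarrow> app (f k)"
  shows "app (\<lambda>x. \<Sum>k<n. f k x)"
  using assms
proof (induction n)
  case 0
  then show ?case using app_zero by simp
next
  case (Suc n)
  then have "app (\<lambda>x. (\<Sum>k<n. f k x) + f n x)" by (intro app_add) auto
  then show ?case by simp
qed

lemma lift_norm:
  fixes x :: "'a::euclidean_space"
  assumes "norm x \<le> 1"
  shows "norm (lift x) \<le> 1"
proof -
  have "(norm x)\<^sup>2 \<le> 1" using assms by (simp add: power_le_one)
  then have "sqrt ((norm x)\<^sup>2 + 1) \<le> sqrt 2" by simp
  then have "norm (x, 1::real) \<le> sqrt 2" by (simp add: norm_Pair)
  moreover have "norm (lift x) = norm (x, 1::real) / sqrt 2"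
    unfolding lift_def by (simp only: norm_scaleR) simp
  ultimately show ?thesis by (simp add: divide_le_eq)
qed

lemma inner_lift:
  fixes x \<alpha> :: "'a::euclidean_space"
  shows "(sqrt 2 *\<^sub>R \<alpha>, sqrt 2 * \<beta>) \<bullet> lift x = \<alpha> \<bullet> x + \<beta>"
  unfolding lift_def by (simp add: inner_Pair)

lemma app_relu: "app (\<lambda>x::'a::euclidean_space. max 0 (\<alpha> \<bullet> x + \<beta>))"
  unfolding app_def
proof (intro allI impI)
  fix \<delta> :: real assume d: "\<delta> > 0"
  obtain U :: "'a \<times> real \<Rightarrow> 'a \<times> real" where U: "goodU U"
    "\<And>z. \<bar>infnet U z - max 0 ((sqrt 2 *\<^sub>R \<alpha>, sqrt 2 * \<beta>) \<bullet> z)\<bar> \<le> \<delta> * norm z"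
    using relu_approx[OF d] by blast
  have "\<bar>max 0 (\<alpha> \<bullet> x + \<beta>) - infnet U (lift x)\<bar> \<le> \<delta>" if x: "x \<in> cball 0 1" for x
  proof -
    have "\<bar>max 0 (\<alpha> \<bullet> x + \<beta>) - infnet U (lift x)\<bar> \<le> \<delta> * norm (lift x)"
      using U(2)[of "lift x"] unfolding inner_lift by (simp add: abs_minus_commute)
    also have "\<dots> \<le> \<delta>" using lift_norm[of x] x d by (simp add: mult_le_cancel_left1)
    finally show ?thesis .
  qed
  then show "\<exists>U::'a \<times> real \<Rightarrow> 'a \<times> real. goodU U \<and> (\<forall>x\<in>cball 0 1. \<bar>max 0 (\<alpha> \<bullet> x + \<beta>) - infnet U (lift x)\<bar> \<le> \<delta>)"
    using U(1) by blast
qed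

lemma app_const: "app (\<lambda>x::'a::euclidean_space. c)"
proof -
  have "app (\<lambda>x::'a. c * max 0 (0 \<bullet> x + 1))" by (intro app_scale app_relu)
  then show ?thesis by simp
qed

lemma app_ridge:
  fixes w :: "'a::euclidean_space" and \<phi> :: "real \<Rightarrow> real"
  assumes T: "T > 0"
    and lip: "\<And>s t. s \<in> {-T..T} \<Longrightarrow> t \<in> {-T..T} \<Longrightarrow> \<bar>\<phi> s - \<phi> t\<bar> \<le> L * \<bar>s - t\<bar>"
    and wx: "\<And>x. x \<in> cball 0 1 \<Longrightarrow> \<bar>w \<bullet> x\<bar> \<le> T"
  shows "app (\<lambda>x. \<phi> (w \<bullet> x))"
proof (rule app_unif)
  fix \<delta> :: real assume d: "\<delta> > 0"
  obtain n :: nat where n: "n > 4 * \<bar>L\<bar> * T / \<delta>" using reals_Archimedean2 by blast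
  have "0 \<le> 4 * \<bar>L\<bar> * T / \<delta>" using d T by simp
  then have n0: "n > 0" using n by linarith
  define h where "h = (T - - T) / n"
  have hpos: "h > 0" unfolding h_def using T n0 by simp
  define s where "s k = - T + real k * h" for k :: nat
  define H where "H x = \<phi> (- T) + (\<Sum>k<n. (\<phi> (- T + real (Suc k) * ((T - - T) / n)) - \<phi> (- T + real k * ((T - - T) / n))) / ((T - - T) / n) *
            (max 0 (w \<bullet> x - (- T + real k * ((T - - T) / n))) - max 0 (w \<bullet> x - (- T + real (Suc k) * ((T - - T) / n)))))" for x
  have "app H"
    unfolding H_def
  proof (intro app_add app_const app_sum app_scale)
    fix k :: nat
    have "app (\<lambda>x. max 0 (w \<bullet> x + - (- T + real k * ((T - - T) / n))) + (-1) * max 0 (w \<bullet> x + - (- T + real (Suc k) * ((T - - T) / n))))"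
      by (intro app_add app_scale app_relu)
    then show "app (\<lambda>x. max 0 (w \<bullet> x - (- T + real k * ((T - - T) / n))) - max 0 (w \<bullet> x - (- T + real (Suc k) * ((T - - T) / n))))"
      by (simp only: diff_conv_add_uminus mult_minus1)
  qed
  moreover have "\<bar>\<phi> (w \<bullet> x) - H x\<bar> \<le> \<delta>" if x: "x \<in> cball 0 1" for x
  proof -
    have t: "w \<bullet> x \<in> {- T..T}" using wx[OF x] by auto
    have "\<bar>\<phi> (w \<bullet> x) - H x\<bar> \<le> 2 * L * ((T - - T) / n)"
      unfolding H_def by (rule interp[OF _ n0 lip t]) (use T in auto)
    also have "\<dots> \<le> 2 * \<bar>L\<bar> * ((T - - T) / n)" using T n0 by (intro mult_right_mono) auto
    also have "\<dots> \<le> \<delta>"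
    proof -
      have "4 * \<bar>L\<bar> * T < \<delta> * n" using n d by (simp add: divide_less_eq mult.commute)
      then show ?thesis using n0 by (simp add: divide_le_eq field_simps)
    qed
    finally show ?thesis .
  qed
  ultimately show "\<exists>h. app h \<and> (\<forall>x\<in>cball 0 1. \<bar>\<phi> (w \<bullet> x) - h x\<bar> \<le> \<delta>)" by blast
qed

lemma exp_lip: "\<bar>exp s - exp t\<bar> \<le> exp T * \<bar>s - t\<bar>" if "s \<le> T" "t \<le> T" for s t T :: real
proof -
  have key: "exp b - exp a \<le> exp T * (b - a)" if "a \<le> b" "b \<le> T" for a b :: real
  proof -
    have "1 + (a - b) \<le> exp (a - b)" by (rule exp_ge_add_one_self)
    then have "exp b * (1 + (a - b)) \<le> exp b * exp (a - b)" by (intro mult_left_mono) auto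
    then have "exp b - exp a \<le> exp b * (b - a)" by (simp add: exp_diff algebra_simps)
    also have "\<dots> \<le> exp T * (b - a)" using that by (intro mult_right_mono) auto
    finally show ?thesis .
  qed
  show ?thesis
  proof (cases "t \<le> s")
    case True then show ?thesis using key[of t s] that by simp
  next
    case False then show ?thesis using key[of s t] that by (simp add: abs_minus_commute)
  qed
qed

lemma app_exp: "app (\<lambda>x::'a::euclidean_space. exp (w \<bullet> x))"
proof (cases "w = 0")
  case True then show ?thesis using app_const[of 1] by simp
next
  case False
  show ?thesis
  proof (rule app_ridge[where T = "norm w" and L = "exp (norm w)"])
    show "norm w > 0" using False by simp
    show "\<bar>exp s - exp t\<bar> \<le> exp (norm w) * \<bar>s - t\<bar>" if "s \<in> {- norm w..norm w}" "t \<in> {- norm w..norm w}" for s t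
      using that by (intro exp_lip) auto
    show "\<bar>w \<bullet> x\<bar> \<le> norm w" if "x \<in> cball 0 1" for x
    proof -
      have "\<bar>w \<bullet> x\<bar> \<le> norm w * norm x" by (rule Cauchy_Schwarz_ineq2)
      also have "\<dots> \<le> norm w" using that by (simp add: mult_left_le)
      finally show ?thesis .
    qed
  qed
qed

inductive_set Eset :: "('a::euclidean_space \<Rightarrow> real) set" where
  Eexp: "(\<lambda>x. exp (w \<bullet> x)) \<in> Eset"
| Eadd: "f \<in> Eset \<Longrightarrow> g \<in> Eset \<Longrightarrow> (\<lambda>x. f x + g x) \<in> Eset"
| Escale: "f \<in> Eset \<Longrightarrow> (\<lambda>x. c * f x) \<in> Eset"

lemma Emult1: "g \<in> Eset \<Longrightarrow> (\<lambda>x. exp (w \<bullet> x) * g x) \<in> Eset"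
proof (induction g rule: Eset.induct)
  case (Eexp w')
  have "(\<lambda>x. exp ((w + w') \<bullet> x)) \<in> Eset" by (rule Eset.Eexp)
  then show ?case by (simp add: inner_add_left exp_add)
next
  case (Eadd f g)
  then have "(\<lambda>x. exp (w \<bullet> x) * f x + exp (w \<bullet> x) * g x) \<in> Eset" using Eadd.IH by (intro Eset.Eadd)
  then show ?case by (simp add: distrib_left)
next
  case (Escale f c)
  then have "(\<lambda>x. c * (exp (w \<bullet> x) * f x)) \<in> Eset" using Escale.IH by (intro Eset.Escale)
  then show ?case by (simp add: mult.left_commute)
qed

lemma Emult: "f \<in> Eset \<Longrightarrow> g \<in> Eset \<Longrightarrow> (\<lambda>x. f x * g x) \<in> Eset"
proof (induction f rule: Eset.induct)
  case (Eexp w)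
  then show ?case by (rule Emult1)
next
  case (Eadd f1 f2)
  then have "(\<lambda>x. f1 x * g x + f2 x * g x) \<in> Eset" by (intro Eset.Eadd) auto
  then show ?case by (simp add: distrib_right)
next
  case (Escale f c)
  then have "(\<lambda>x. c * (f x * g x)) \<in> Eset" by (intro Eset.Escale) auto
  then show ?case by (simp add: mult.assoc)
qed

lemma Econst: "(\<lambda>x. c) \<in> Eset"
proof -
  have "(\<lambda>x. c * exp (0 \<bullet> x)) \<in> Eset" by (intro Eset.Escale Eset.Eexp)
  then show ?thesis by simp
qed

lemma Econt: "f \<in> Eset \<Longrightarrow> continuous_on S f"
  by (induction f rule: Eset.induct) (auto intro!: continuous_intros)

lemma Eapp: "f \<in> Eset \<Longrightarrow> app f"
  by (induction f rule: Eset.induct) (auto intro: app_exp app_add app_scale)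

lemma app_cont:
  fixes h :: "'a::euclidean_space \<Rightarrow> real"
  assumes h: "continuous_on (cball 0 1) h"
  shows "app h"
proof -
  interpret F: function_ring_on "Eset :: ('a \<Rightarrow> real) set" "cball 0 1"
  proof
    show "compact (cball (0::'a) 1)" by simp
    show "continuous_on (cball 0 1) f" if "f \<in> Eset" for f using that by (rule Econt)
    show "(\<lambda>x. f x + g x) \<in> Eset" if "f \<in> Eset" "g \<in> Eset" for f g using that by (rule Eadd)
    show "(\<lambda>x. f x * g x) \<in> Eset" if "f \<in> Eset" "g \<in> Eset" for f g using that by (rule Emult)
    show "(\<lambda>_. c) \<in> Eset" for c by (rule Econst)
    show "\<exists>f\<in>Eset. f x \<noteq> f y" if "x \<in> cball 0 1" "y \<in> cball 0 1" "x \<noteq> y" for x y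
    proof
      show "(\<lambda>z. exp ((x - y) \<bullet> z)) \<in> Eset" by (rule Eexp)
      have "(x - y) \<bullet> x - (x - y) \<bullet> y = (x - y) \<bullet> (x - y)" by (simp add: inner_diff_right)
      moreover have "(x - y) \<bullet> (x - y) > 0" using that by simp
      ultimately have "(x - y) \<bullet> x \<noteq> (x - y) \<bullet> y" by linarith
      then show "exp ((x - y) \<bullet> x) \<noteq> exp ((x - y) \<bullet> y)" by simp
    qed
  qed
  show ?thesis
  proof (rule app_unif)
    fix \<delta> :: real assume d: "\<delta> > 0"
    obtain g where g: "g \<in> Eset" "\<forall>x\<in>cball 0 1. \<bar>h x - g x\<bar> < \<delta>"
      using F.Stone_Weierstrass_basic[OF h d] by blast
    show "\<exists>g. app g \<and> (\<forall>x\<in>cball 0 1. \<bar>h x - g x\<bar> \<le> \<delta>)"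
      using g Eapp by (meson less_eq_real_def)
  qed
qed

lemma L1_indicator:
  fixes \<nu> :: "'a::euclidean_space measure"
  assumes sets: "sets \<nu> = sets borel" and fin: "finite_measure \<nu>" and A: "A \<in> sets borel" and d: "\<delta> > 0"
  shows "\<exists>h. continuous_on UNIV h \<and> (\<integral>\<^sup>+ x. ennreal \<bar>indicator A x - h x\<bar> \<partial>\<nu>) \<le> ennreal \<delta>"
proof -
  interpret finite_measure \<nu> by (rule fin)
  have fin': "emeasure \<nu> (space \<nu>) \<noteq> \<infinity>" by simp
  have d2: "\<delta> / 2 > 0" using d by simp
  have "{} \<in> {K. K \<subseteq> A \<and> compact K}" by simp
  then have Ane: "{K. K \<subseteq> A \<and> compact K} \<noteq> {}" by blast
  obtain K where K: "K \<subseteq> A" "compact K" "emeasure \<nu> A < emeasure \<nu> K + ennreal (\<delta>/2)"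
    using SUP_approx_ennreal[OF d2 _ inner_regular[OF sets fin' A]] Ane by fastforce
  obtain Op where Op: "A \<subseteq> Op" "open Op" "emeasure \<nu> Op < emeasure \<nu> A + ennreal (\<delta>/2)"
    using INF_approx_ennreal[OF d2 outer_regular[OF sets fin' A]] by fastforce
  have Km: "K \<in> sets \<nu>" using K(2) sets by (simp add: compact_imp_closed)
  have Om: "Op \<in> sets \<nu>" using Op(2) sets by simp
  have Am: "A \<in> sets \<nu>" using A sets by simp
  have r1: "measure \<nu> A < measure \<nu> K + \<delta>/2"
    using K(3) d by (simp add: emeasure_eq_measure ennreal_plus[symmetric] ennreal_less_iff del: ennreal_plus)
  have r2: "measure \<nu> Op < measure \<nu> A + \<delta>/2"
    using Op(3) d by (simp add: emeasure_eq_measure ennreal_plus[symmetric] ennreal_less_iff del: ennreal_plus)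
  have KO: "K \<subseteq> Op" using K Op by blast
  have mOK: "measure \<nu> (Op - K) \<le> \<delta>"
    using finite_measure_Diff[OF Om Km KO] r1 r2 by simp
  obtain h :: "'a \<Rightarrow> real" where hc: "continuous_on UNIV h" and h01: "\<And>x. 0 \<le> h x \<and> h x \<le> 1"
    and hK: "\<And>x. x \<in> K \<Longrightarrow> h x = 1" and hO: "\<And>x. x \<notin> Op \<Longrightarrow> h x = 0"
  proof (cases "K = {}")
    case True
    show ?thesis by (rule that[of "\<lambda>x. 0"]) (auto simp: True)
  next
    case Kne: False
    show ?thesis
    proof (cases "Op = UNIV")
      case True
      show ?thesis by (rule that[of "\<lambda>x. 1"]) (auto simp: True)
    next
      case False
      then have cne: "- Op \<noteq> {}" by auto
      have c1: "closedin (top_of_set UNIV) (- Op)" using Op(2) by (simp add: closed_Compl)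
      have c2: "closedin (top_of_set UNIV) K" using K(2) by (simp add: compact_imp_closed)
      have c3: "(- Op) \<inter> K = {}" using KO by auto
      obtain f :: "'a \<Rightarrow> real" where f: "continuous_on UNIV f"
        "\<And>x. x \<in> UNIV \<Longrightarrow> f x \<in> closed_segment 0 1"
        "\<And>x. x \<in> UNIV \<Longrightarrow> (f x = 0 \<longleftrightarrow> x \<in> - Op)"
        "\<And>x. x \<in> UNIV \<Longrightarrow> (f x = 1 \<longleftrightarrow> x \<in> K)"
        by (rule Urysohn_both_ne[OF c1 c2 c3 cne Kne zero_neq_one]) blast
      show ?thesis
      proof (rule that[of f])
        show "continuous_on UNIV f" by (rule f(1))
        show "0 \<le> f x \<and> f x \<le> 1" for x using f(2)[of x] by (simp add: closed_segment_eq_real_ivl)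
        show "f x = 1" if "x \<in> K" for x using f(4)[of x] that by simp
        show "f x = 0" if "x \<notin> Op" for x using f(3)[of x] that by simp
      qed
    qed
  qed
  have "(\<integral>\<^sup>+ x. ennreal \<bar>indicator A x - h x\<bar> \<partial>\<nu>) \<le> (\<integral>\<^sup>+ x. indicator (Op - K) x \<partial>\<nu>)"
  proof (intro nn_integral_mono)
    fix x
    show "ennreal \<bar>indicator A x - h x\<bar> \<le> indicator (Op - K) x"
    proof (cases "x \<in> K")
      case True then show ?thesis using hK K(1) by (auto simp: indicator_def)
    next
      case nK: False
      show ?thesis
      proof (cases "x \<in> Op")
        case True
        have "\<bar>indicator A x - h x\<bar> \<le> (1::real)" using h01[of x] by (auto simp: indicator_def)
        then show ?thesis using True nK by (simp add: indicator_def)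
      next
        case False
        then show ?thesis using hO Op(1) by (auto simp: indicator_def)
      qed
    qed
  qed
  also have "\<dots> = emeasure \<nu> (Op - K)" using Om Km by simp
  also have "\<dots> = ennreal (measure \<nu> (Op - K))" by (simp add: emeasure_eq_measure)
  also have "\<dots> \<le> ennreal \<delta>" using mOK by (simp add: ennreal_leI)
  finally show ?thesis using hc by blast
qed

lemma cont_meas:
  assumes "sets \<nu> = sets borel" "continuous_on UNIV (h :: 'a::euclidean_space \<Rightarrow> real)"
  shows "h \<in> borel_measurable \<nu>"
  using assms by (simp add: measurable_cong_sets[OF assms(1) refl] borel_measurable_continuous_onI)

lemma L1_cont:
  fixes \<nu> :: "'a::euclidean_space measure" and f :: "'a \<Rightarrow> real"
  assumes sets: "sets \<nu> = sets borel" and fin: "finite_measure \<nu>" and f: "integrable \<nu> f"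
  shows "\<forall>\<delta>>0. \<exists>h. continuous_on UNIV h \<and> (\<integral>\<^sup>+ x. ennreal \<bar>f x - h x\<bar> \<partial>\<nu>) \<le> ennreal \<delta>"
  using f
proof (induction rule: integrable_induct)
  case (base A c)
  show ?case
  proof (intro allI impI)
    fix \<delta> :: real assume d: "\<delta> > 0"
    have d': "\<delta> / (\<bar>c\<bar> + 1) > 0" using d by (simp add: add_nonneg_pos)
    have "A \<in> sets borel" using base sets by simp
    then obtain h where h: "continuous_on UNIV h" "(\<integral>\<^sup>+ x. ennreal \<bar>indicator A x - h x\<bar> \<partial>\<nu>) \<le> ennreal (\<delta> / (\<bar>c\<bar> + 1))"
      using L1_indicator[OF sets fin _ d'] by blast
    have hm: "h \<in> borel_measurable \<nu>" using cont_meas[OF sets h(1)] .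
    have Am: "A \<in> sets \<nu>" using base by simp
    have "(\<integral>\<^sup>+ x. ennreal \<bar>indicator A x *\<^sub>R c - h x * c\<bar> \<partial>\<nu>) = (\<integral>\<^sup>+ x. ennreal \<bar>indicator A x - h x\<bar> * ennreal \<bar>c\<bar> \<partial>\<nu>)"
      by (intro nn_integral_cong) (simp add: abs_mult[symmetric] left_diff_distrib ennreal_mult[symmetric])
    also have "\<dots> = (\<integral>\<^sup>+ x. ennreal \<bar>indicator A x - h x\<bar> \<partial>\<nu>) * ennreal \<bar>c\<bar>"
      by (rule nn_integral_multc) (use hm Am in measurable)
    also have "\<dots> \<le> ennreal (\<delta> / (\<bar>c\<bar> + 1)) * ennreal \<bar>c\<bar>"
      using h(2) by (intro mult_right_mono) auto
    also have "\<dots> = ennreal (\<delta> / (\<bar>c\<bar> + 1) * \<bar>c\<bar>)" by (rule ennreal_mult[symmetric]) (use d' in auto)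
    also have "\<dots> \<le> ennreal \<delta>"
    proof (intro ennreal_leI)
      have "\<delta> / (\<bar>c\<bar> + 1) * \<bar>c\<bar> \<le> \<delta> / (\<bar>c\<bar> + 1) * (\<bar>c\<bar> + 1)" using d' by (intro mult_left_mono) auto
      also have "\<dots> = \<delta>" by simp
      finally show "\<delta> / (\<bar>c\<bar> + 1) * \<bar>c\<bar> \<le> \<delta>" .
    qed
    finally show "\<exists>h. continuous_on UNIV h \<and> (\<integral>\<^sup>+ x. ennreal \<bar>indicator A x *\<^sub>R c - h x\<bar> \<partial>\<nu>) \<le> ennreal \<delta>"
      using h(1) by (intro exI[of _ "\<lambda>x. h x * c"]) (auto intro!: continuous_intros)
  qed
next
  case (add f g)
  show ?case
  proof (intro allI impI)
    fix \<delta> :: real assume d: "\<delta> > 0"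
    obtain h1 where h1: "continuous_on UNIV h1" "(\<integral>\<^sup>+ x. ennreal \<bar>f x - h1 x\<bar> \<partial>\<nu>) \<le> ennreal (\<delta>/2)"
      using add d by (meson half_gt_zero)
    obtain h2 where h2: "continuous_on UNIV h2" "(\<integral>\<^sup>+ x. ennreal \<bar>g x - h2 x\<bar> \<partial>\<nu>) \<le> ennreal (\<delta>/2)"
      using add d by (meson half_gt_zero)
    have m: "f \<in> borel_measurable \<nu>" "g \<in> borel_measurable \<nu>" "h1 \<in> borel_measurable \<nu>" "h2 \<in> borel_measurable \<nu>"
      using add cont_meas[OF sets h1(1)] cont_meas[OF sets h2(1)] by auto
    have "(\<integral>\<^sup>+ x. ennreal \<bar>f x + g x - (h1 x + h2 x)\<bar> \<partial>\<nu>) \<le> (\<integral>\<^sup>+ x. ennreal \<bar>f x - h1 x\<bar> + ennreal \<bar>g x - h2 x\<bar> \<partial>\<nu>)"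
      by (intro nn_integral_mono) (simp add: ennreal_plus[symmetric] del: ennreal_plus)
    also have "\<dots> = (\<integral>\<^sup>+ x. ennreal \<bar>f x - h1 x\<bar> \<partial>\<nu>) + (\<integral>\<^sup>+ x. ennreal \<bar>g x - h2 x\<bar> \<partial>\<nu>)"
      by (rule nn_integral_add) (use m in measurable)
    also have "\<dots> \<le> ennreal (\<delta>/2) + ennreal (\<delta>/2)" using h1 h2 by (intro add_mono) auto
    also have "\<dots> = ennreal \<delta>" using d by (simp add: ennreal_plus[symmetric] del: ennreal_plus)
    finally show "\<exists>h. continuous_on UNIV h \<and> (\<integral>\<^sup>+ x. ennreal \<bar>f x + g x - h x\<bar> \<partial>\<nu>) \<le> ennreal \<delta>"
      using h1(1) h2(1) by (intro exI[of _ "\<lambda>x. h1 x + h2 x"]) (auto intro!: continuous_intros)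
  qed
next
  case (lim f s)
  show ?case
  proof (intro allI impI)
    fix \<delta> :: real assume d: "\<delta> > 0"
    have ms: "\<And>i. s i \<in> borel_measurable \<nu>" using lim by auto
    have mf: "f \<in> borel_measurable \<nu>" using lim by auto
    have "(\<lambda>i. (\<integral>\<^sup>+x. norm (f x - s i x) \<partial>\<nu>)) \<longlonglongrightarrow> 0"
    proof (rule nn_integral_dominated_convergence_norm[where w = "\<lambda>x. 2 * norm (f x)"])
      show "(\<lambda>x. 2 * norm (f x)) \<in> borel_measurable \<nu>" using mf by measurable
      show "AE x in \<nu>. norm (s j x) \<le> 2 * norm (f x)" for j by (rule AE_I2) (use lim in blast)
      have "(\<integral>\<^sup>+x. ennreal (2 * norm (f x)) \<partial>\<nu>) = 2 * (\<integral>\<^sup>+x. ennreal (norm (f x)) \<partial>\<nu>)"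
        using mf by (simp add: ennreal_mult nn_integral_cmult)
      also have "\<dots> < \<infinity>"
      proof -
        have "integrable \<nu> f" using lim by blast
        then have "(\<integral>\<^sup>+x. ennreal (norm (f x)) \<partial>\<nu>) < \<infinity>" by (simp add: integrable_iff_bounded)
        then show ?thesis by (simp add: ennreal_mult_less_top)
      qed
      finally show "(\<integral>\<^sup>+x. ennreal (2 * norm (f x)) \<partial>\<nu>) < \<infinity>" .
      show "AE x in \<nu>. (\<lambda>i. s i x) \<longlonglongrightarrow> f x" by (rule AE_I2) (use lim in blast)
    qed (use ms mf in auto)
    moreover have "(0::ennreal) < ennreal (\<delta>/2)" using d by simp
    ultimately have "eventually (\<lambda>i. (\<integral>\<^sup>+x. norm (f x - s i x) \<partial>\<nu>) < ennreal (\<delta>/2)) sequentially"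
      by (rule order_tendstoD(2))
    then obtain i where i: "(\<integral>\<^sup>+x. norm (f x - s i x) \<partial>\<nu>) < ennreal (\<delta>/2)"
      by (auto simp: eventually_sequentially)
    obtain h where h: "continuous_on UNIV h" "(\<integral>\<^sup>+ x. ennreal \<bar>s i x - h x\<bar> \<partial>\<nu>) \<le> ennreal (\<delta>/2)"
    proof -
      have IHi: "\<forall>\<delta>>0. \<exists>h. continuous_on UNIV h \<and> (\<integral>\<^sup>+ x. ennreal \<bar>s i x - h x\<bar> \<partial>\<nu>) \<le> ennreal \<delta>"
        using lim by blast
      show ?thesis using IHi d that by (meson half_gt_zero)
    qed
    have mh: "h \<in> borel_measurable \<nu>" using cont_meas[OF sets h(1)] .
    have "(\<integral>\<^sup>+ x. ennreal \<bar>f x - h x\<bar> \<partial>\<nu>) \<le> (\<integral>\<^sup>+ x. ennreal \<bar>f x - s i x\<bar> + ennreal \<bar>s i x - h x\<bar> \<partial>\<nu>)"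
      by (intro nn_integral_mono) (simp add: ennreal_plus[symmetric] del: ennreal_plus)
    also have "\<dots> = (\<integral>\<^sup>+ x. ennreal \<bar>f x - s i x\<bar> \<partial>\<nu>) + (\<integral>\<^sup>+ x. ennreal \<bar>s i x - h x\<bar> \<partial>\<nu>)"
      by (rule nn_integral_add) (use ms mf mh in measurable)
    also have "\<dots> \<le> ennreal (\<delta>/2) + ennreal (\<delta>/2)" using i h by (intro add_mono) auto
    also have "\<dots> = ennreal \<delta>" using d by (simp add: ennreal_plus[symmetric] del: ennreal_plus)
    finally show "\<exists>h. continuous_on UNIV h \<and> (\<integral>\<^sup>+ x. ennreal \<bar>f x - h x\<bar> \<partial>\<nu>) \<le> ennreal \<delta>"
      using h(1) by blast
  qed
qed

lemma pos1: "1 + exp (- r) > (0::real)"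
  using exp_gt_zero[of "-r"] by linarith

lemma logloss_nonneg: "logloss r \<ge> 0"
  unfolding logloss_def by simp

lemma logloss_mono: "a \<le> b \<Longrightarrow> logloss b \<le> logloss a"
  unfolding logloss_def by (subst ln_le_cancel_iff) (use pos1 in auto)

lemma logloss_lip: "\<bar>logloss a - logloss b\<bar> \<le> \<bar>a - b\<bar>"
proof -
  have key: "logloss a \<le> logloss b + (b - a)" if "a \<le> b" for a b :: real
  proof -
    have "1 + exp (- a) \<le> exp (b - a) + exp (- a)" using that by simp
    also have "\<dots> = (1 + exp (- b)) * exp (b - a)"
      by (simp add: algebra_simps exp_diff exp_minus field_simps)
    finally have "ln (1 + exp (- a)) \<le> ln ((1 + exp (- b)) * exp (b - a))"
      by (subst ln_le_cancel_iff) (use pos1[of a] pos1[of b] in auto)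
    also have "\<dots> = ln (1 + exp (- b)) + (b - a)"
      using pos1[of b] by (simp add: ln_mult)
    finally show ?thesis unfolding logloss_def .
  qed
  show ?thesis
  proof (cases "a \<le> b")
    case True then show ?thesis using key[OF True] logloss_mono[OF True] by simp
  next
    case False then have "b \<le> a" by simp
    then show ?thesis using key[of b a] logloss_mono[of b a] by simp
  qed
qed

lemma logloss_clamp:
  assumes "M \<ge> 0"
  shows "logloss (max (- M) (min M t)) \<le> logloss t + logloss M"
proof -
  consider "t \<ge> M" | "t \<le> - M" | "- M \<le> t \<and> t \<le> M" by linarith
  then show ?thesis
  proof cases
    case 1 then show ?thesis using assms logloss_nonneg[of t] by simp
  next
    case 2 then show ?thesis using assms logloss_mono[of t "- M"] logloss_nonneg[of M] by simp
  next
    case 3 then show ?thesis using logloss_nonneg[of M] by simp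
  qed
qed

lemma logloss_le_exp: "logloss M \<le> exp (- M)"
  unfolding logloss_def by (rule ln_add_one_self_le_self) simp

lemma logloss_meas[measurable]: "logloss \<in> borel_measurable borel"
proof -
  have "continuous_on UNIV (\<lambda>r::real. ln (1 + exp (- r)))"
    by (intro continuous_intros) (metis pos1 less_irrefl)
  then show ?thesis unfolding logloss_def[abs_def] by (rule borel_measurable_continuous_onI)
qed

theorem lemmaA12:
  fixes \<mu> :: "('a::euclidean_space \<times> real) measure" and \<epsilon> :: real
  assumes "prob_space \<mu>"
    and "sets \<mu> = sets borel"
    and "AE p in \<mu>. snd p \<in> {-1, 1}"
    and "AE p in \<mu>. norm (fst p) \<le> 1"
    and "\<epsilon> > 0"
  shows "\<exists>U :: 'a \<times> real \<Rightarrow> 'a \<times> real.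
           U \<in> borel_measurable borel \<and>
           (\<exists>R. \<forall>v. norm (U v) \<le> R) \<and>
           riskU \<mu> U \<le> risk_opt \<mu> + ennreal \<epsilon>"
proof -
  interpret prob_space \<mu> by (rule assms(1))
  note sets = assms(2)
  have e4: "\<epsilon> / 4 > 0" using assms(5) by simp
  have mcong: "F \<in> borel_measurable \<mu>" if "F \<in> borel_measurable borel" for F :: "'a \<times> real \<Rightarrow> real"
    using that by (simp add: measurable_cong_sets[OF sets refl])
  have fstm: "fst \<in> measurable \<mu> (borel :: 'a measure)"
    by (subst measurable_cong_sets[OF sets refl]) (rule borel_measurable_continuous_onI, intro continuous_intros)
  define \<nu> where "\<nu> = distr \<mu> (borel :: 'a measure) fst"
  have nsets: "sets \<nu> = sets borel" unfolding \<nu>_def by simp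
  have nfin: "finite_measure \<nu>"
  proof -
    have "prob_space \<nu>" unfolding \<nu>_def by (rule prob_space_distr[OF fstm])
    then show ?thesis by (simp add: prob_space_def)
  qed
  define L where "L g = (\<integral>\<^sup>+ p. ennreal (logloss (snd p * g (fst p))) \<partial>\<mu>)" for g :: "'a \<Rightarrow> real"
  have ropt: "risk_opt \<mu> = (INF g \<in> (borel_measurable borel :: ('a \<Rightarrow> real) set). L g)"
    unfolding risk_opt_def L_def by simp
  have "L (\<lambda>x. 0) = ennreal (ln 2)"
    unfolding L_def logloss_def by (simp add: emeasure_space_1)
  moreover have "risk_opt \<mu> \<le> L (\<lambda>x. 0)" unfolding ropt by (rule INF_lower) simp
  ultimately have "risk_opt \<mu> \<le> ennreal (ln 2)" by simp
  then have rfin: "risk_opt \<mu> \<noteq> \<infinity>" using neq_top_trans[of "ennreal (ln 2)" "risk_opt \<mu>"] by simp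
  obtain g :: "'a \<Rightarrow> real" where gm: "g \<in> borel_measurable borel" and gL: "L g < risk_opt \<mu> + ennreal (\<epsilon>/4)"
    using INF_approx_ennreal[OF e4 ropt rfin] by blast
  define M where "M = max 1 (- ln (\<epsilon>/4))"
  have M0: "M \<ge> 0" unfolding M_def by simp
  have expM: "exp (- M) \<le> \<epsilon>/4"
  proof -
    have "- M \<le> ln (\<epsilon>/4)" unfolding M_def by simp
    then have "exp (- M) \<le> exp (ln (\<epsilon>/4))" by simp
    then show ?thesis using e4 by simp
  qed
  define gM where "gM x = max (- M) (min M (g x))" for x
  have gMm: "gM \<in> borel_measurable borel" unfolding gM_def using gm by measurable
  have gMb: "\<bar>gM x\<bar> \<le> M" for x unfolding gM_def using M0 by simp
  have gMint: "integrable \<nu> gM"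
  proof -
    interpret finite_measure \<nu> by (rule nfin)
    show ?thesis
    proof (rule integrable_const_bound[where B = M])
      show "AE x in \<nu>. norm (gM x) \<le> M" using gMb by simp
      show "gM \<in> borel_measurable \<nu>" using gMm by (simp add: measurable_cong_sets[OF nsets refl])
    qed
  qed
  obtain h where hc: "continuous_on UNIV h" and hL: "(\<integral>\<^sup>+ x. ennreal \<bar>gM x - h x\<bar> \<partial>\<nu>) \<le> ennreal (\<epsilon>/4)"
    using L1_cont[OF nsets nfin gMint] e4 by blast
  have hm: "h \<in> borel_measurable borel" using hc by (rule borel_measurable_continuous_onI)
  have "app h" by (rule app_cont) (rule continuous_on_subset[OF hc subset_UNIV])
  then obtain U :: "'a \<times> real \<Rightarrow> 'a \<times> real" where U: "goodU U"
    and Uh: "\<forall>x\<in>cball 0 1. \<bar>h x - infnet U (lift x)\<bar> \<le> \<epsilon>/4"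
    using e4 unfolding app_def by blast
  have Um: "U \<in> borel_measurable borel" and UR: "\<exists>R. \<forall>v. norm (U v) \<le> R" using U unfolding goodU_def by auto
  have pw: "AE p in \<mu>. ennreal (logloss (snd p * infnet U (lift (fst p)))) \<le>
      ennreal (logloss (snd p * g (fst p))) + ennreal (\<epsilon>/4) + ennreal (\<epsilon>/4) + ennreal \<bar>gM (fst p) - h (fst p)\<bar>"
    using assms(3,4)
  proof eventually_elim
    case (elim p)
    define x where "x = fst p"
    define y where "y = snd p"
    define F where "F = infnet U (lift x)"
    have y: "y = -1 \<or> y = 1" using elim unfolding y_def by auto
    have x: "x \<in> cball 0 1" using elim unfolding x_def by simp
    have "logloss (y * F) \<le> logloss (y * gM x) + \<bar>y * F - y * gM x\<bar>"
      using logloss_lip[of "y * F" "y * gM x"] by linarith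
    also have "\<bar>y * F - y * gM x\<bar> = \<bar>F - gM x\<bar>" using y by auto
    also have "\<bar>F - gM x\<bar> \<le> \<epsilon>/4 + \<bar>gM x - h x\<bar>"
    proof -
      have "\<bar>h x - F\<bar> \<le> \<epsilon>/4" using Uh x unfolding F_def by blast
      then show ?thesis by arith
    qed
    also have "y * gM x = max (- M) (min M (y * g x))" unfolding gM_def using y M0 by auto
    also have "logloss (max (- M) (min M (y * g x))) \<le> logloss (y * g x) + \<epsilon>/4"
      using logloss_clamp[OF M0, of "y * g x"] logloss_le_exp[of M] expM by linarith
    finally have "logloss (y * F) \<le> logloss (y * g x) + \<epsilon>/4 + \<epsilon>/4 + \<bar>gM x - h x\<bar>" by simp
    then have "ennreal (logloss (y * F)) \<le> ennreal (logloss (y * g x) + \<epsilon>/4 + \<epsilon>/4 + \<bar>gM x - h x\<bar>)"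
      by (rule ennreal_leI)
    also have "\<dots> = ennreal (logloss (y * g x)) + ennreal (\<epsilon>/4) + ennreal (\<epsilon>/4) + ennreal \<bar>gM x - h x\<bar>"
      using e4 logloss_nonneg[of "y * g x"] by (simp add: ennreal_plus[symmetric] del: ennreal_plus)
    finally show ?case unfolding x_def y_def F_def .
  qed
  have m1: "(\<lambda>p. ennreal (logloss (snd p * g (fst p)))) \<in> borel_measurable \<mu>"
  proof -
    have fm: "(fst :: 'a \<times> real \<Rightarrow> 'a) \<in> borel_measurable borel" by (intro borel_measurable_continuous_onI continuous_intros)
    have sm: "(snd :: 'a \<times> real \<Rightarrow> real) \<in> borel_measurable borel" by (intro borel_measurable_continuous_onI continuous_intros)
    have "(\<lambda>p::'a \<times> real. g (fst p)) \<in> borel_measurable borel" using measurable_compose[OF fm gm] .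
    then have "(\<lambda>p::'a \<times> real. snd p * g (fst p)) \<in> borel_measurable borel" using sm by (intro borel_measurable_times) auto
    then have "(\<lambda>p::'a \<times> real. logloss (snd p * g (fst p))) \<in> borel_measurable borel" using measurable_compose[OF _ logloss_meas] by blast
    then have "(\<lambda>p::'a \<times> real. logloss (snd p * g (fst p))) \<in> borel_measurable \<mu>" by (rule mcong)
    then show ?thesis by (rule measurable_compose) simp
  qed
  have m2: "(\<lambda>p. ennreal \<bar>gM (fst p) - h (fst p)\<bar>) \<in> borel_measurable \<mu>"
  proof -
    have fm: "(fst :: 'a \<times> real \<Rightarrow> 'a) \<in> borel_measurable borel" by (intro borel_measurable_continuous_onI continuous_intros)
    have "(\<lambda>x. \<bar>gM x - h x\<bar>) \<in> borel_measurable borel" using gMm hm by measurable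
    then have "(\<lambda>p::'a \<times> real. \<bar>gM (fst p) - h (fst p)\<bar>) \<in> borel_measurable borel" using measurable_compose[OF fm] by blast
    then have "(\<lambda>p::'a \<times> real. \<bar>gM (fst p) - h (fst p)\<bar>) \<in> borel_measurable \<mu>" by (rule mcong)
    then show ?thesis by (rule measurable_compose) simp
  qed
  have "riskU \<mu> U \<le> (\<integral>\<^sup>+ p. ennreal (logloss (snd p * g (fst p))) + ennreal (\<epsilon>/4) + ennreal (\<epsilon>/4) + ennreal \<bar>gM (fst p) - h (fst p)\<bar> \<partial>\<mu>)"
    unfolding riskU_def by (rule nn_integral_mono_AE[OF pw])
  also have "\<dots> = L g + ennreal (\<epsilon>/4) + ennreal (\<epsilon>/4) + (\<integral>\<^sup>+ p. ennreal \<bar>gM (fst p) - h (fst p)\<bar> \<partial>\<mu>)"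
  proof -
    have c: "(\<lambda>p. ennreal (\<epsilon>/4)) \<in> borel_measurable \<mu>" by simp
    have i1: "(\<integral>\<^sup>+ p. ennreal (\<epsilon>/4) \<partial>\<mu>) = ennreal (\<epsilon>/4)" by (simp add: emeasure_space_1)
    have "(\<integral>\<^sup>+ p. ennreal (logloss (snd p * g (fst p))) + ennreal (\<epsilon>/4) + ennreal (\<epsilon>/4) + ennreal \<bar>gM (fst p) - h (fst p)\<bar> \<partial>\<mu>)
       = (\<integral>\<^sup>+ p. ennreal (logloss (snd p * g (fst p))) + ennreal (\<epsilon>/4) + ennreal (\<epsilon>/4) \<partial>\<mu>) + (\<integral>\<^sup>+ p. ennreal \<bar>gM (fst p) - h (fst p)\<bar> \<partial>\<mu>)"
      by (rule nn_integral_add) (use m1 m2 c in \<open>auto intro!: borel_measurable_add\<close>)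
    also have "(\<integral>\<^sup>+ p. ennreal (logloss (snd p * g (fst p))) + ennreal (\<epsilon>/4) + ennreal (\<epsilon>/4) \<partial>\<mu>)
       = (\<integral>\<^sup>+ p. ennreal (logloss (snd p * g (fst p))) + ennreal (\<epsilon>/4) \<partial>\<mu>) + (\<integral>\<^sup>+ p. ennreal (\<epsilon>/4) \<partial>\<mu>)"
      by (rule nn_integral_add) (use m1 c in \<open>auto intro!: borel_measurable_add\<close>)
    also have "(\<integral>\<^sup>+ p. ennreal (logloss (snd p * g (fst p))) + ennreal (\<epsilon>/4) \<partial>\<mu>)
       = L g + (\<integral>\<^sup>+ p. ennreal (\<epsilon>/4) \<partial>\<mu>)"
      unfolding L_def by (rule nn_integral_add) (use m1 c in auto)
    finally show ?thesis unfolding i1 .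
  qed
  also have "(\<integral>\<^sup>+ p. ennreal \<bar>gM (fst p) - h (fst p)\<bar> \<partial>\<mu>) = (\<integral>\<^sup>+ x. ennreal \<bar>gM x - h x\<bar> \<partial>\<nu>)"
    unfolding \<nu>_def using gMm hm by (subst nn_integral_distr[OF fstm]) auto
  also have "L g + ennreal (\<epsilon>/4) + ennreal (\<epsilon>/4) + (\<integral>\<^sup>+ x. ennreal \<bar>gM x - h x\<bar> \<partial>\<nu>) \<le>
      (risk_opt \<mu> + ennreal (\<epsilon>/4)) + ennreal (\<epsilon>/4) + ennreal (\<epsilon>/4) + ennreal (\<epsilon>/4)"
    using gL hL by (intro add_mono) auto
  also have "\<dots> = risk_opt \<mu> + ennreal \<epsilon>"
  proof -
    have "ennreal (\<epsilon>/4) + ennreal (\<epsilon>/4) + ennreal (\<epsilon>/4) + ennreal (\<epsilon>/4) = ennreal \<epsilon>"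
      using e4 by (simp add: ennreal_plus[symmetric] del: ennreal_plus)
    then show ?thesis by (simp add: add.assoc)
  qed
  finally show ?thesis using Um UR by blast
qed

end
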